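(* Let $X$ be a finite q-cycle set and suppose that the subgroup of $\mathrm{Sym}(X)$ generated by $\{\mathfrak{q},\mathfrak{q}'\}$ acts transitively on $X$. Then $X$ is irreducible.
   Context: A q-cycle set is a non-empty set $X$ with operations $\cdot,:$ such that each $y\mapsto x\cdot y$ is bijective and $(x\cdot y)\cdot(x\cdot z)=(y:x)\cdot(y\cdot z)$, $(x:y):(x:z)=(y\cdot x):(y:z)$, $(x\cdot y):(x\cdot z)=(y:x)\cdot(y:z)$ for all $x,y,z$. The squaring maps are $\mathfrak{q}(x):=x\cdot x$, $\mathfrak{q}'(x):=x:x$ (the hypothesis presupposes they are permutations of $X$). A sub-q-cycle set is a subset that is a q-cycle set under the restricted operations (the empty set also counts); $X$ is irreducible if $\emptyset$ and $X$ are its only sub-q-cycle sets. *)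

theory Defs
  imports "HOL-Algebra.Bij" "HOL-Algebra.Generated_Groups"
begin

definition q_cycle_set :: "'a set \<Rightarrow> ('a \<Rightarrow> 'a \<Rightarrow> 'a) \<Rightarrow> ('a \<Rightarrow> 'a \<Rightarrow> 'a) \<Rightarrow> bool" where
  "q_cycle_set X dot col \<longleftrightarrow>
     X \<noteq> {} \<and>
     (\<forall>x\<in>X. \<forall>y\<in>X. dot x y \<in> X \<and> col x y \<in> X) \<and>
     (\<forall>x\<in>X. bij_betw (dot x) X X) \<and>
     (\<forall>x\<in>X. \<forall>y\<in>X. \<forall>z\<in>X.
        dot (dot x y) (dot x z) = dot (col y x) (dot y z) \<and>
        col (col x y) (col x z) = col (dot y x) (col y z) \<and>
        col (dot x y) (dot x z) = dot (col y x) (col y z))"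

definition sub_q_cycle_set :: "'a set \<Rightarrow> ('a \<Rightarrow> 'a \<Rightarrow> 'a) \<Rightarrow> ('a \<Rightarrow> 'a \<Rightarrow> 'a) \<Rightarrow> 'a set \<Rightarrow> bool" where
  "sub_q_cycle_set X dot col Y \<longleftrightarrow> Y \<subseteq> X \<and> (Y = {} \<or> q_cycle_set Y dot col)"

definition irreducible_qcs :: "'a set \<Rightarrow> ('a \<Rightarrow> 'a \<Rightarrow> 'a) \<Rightarrow> ('a \<Rightarrow> 'a \<Rightarrow> 'a) \<Rightarrow> bool" where
  "irreducible_qcs X dot col \<longleftrightarrow>
     (\<forall>Y. sub_q_cycle_set X dot col Y \<longrightarrow> Y = {} \<or> Y = X)"

text \<open>Squaring maps, as elements of Sym(X) (extensional functions on X).\<close>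
definition sq_dot :: "'a set \<Rightarrow> ('a \<Rightarrow> 'a \<Rightarrow> 'a) \<Rightarrow> 'a \<Rightarrow> 'a" where
  "sq_dot X dot = (\<lambda>x\<in>X. dot x x)"

definition sq_col :: "'a set \<Rightarrow> ('a \<Rightarrow> 'a \<Rightarrow> 'a) \<Rightarrow> 'a \<Rightarrow> 'a" where
  "sq_col X col = (\<lambda>x\<in>X. col x x)"

end

theory Submission
  imports Defs
begin

lemma gen_inv:
  assumes H: "\<And>h. h \<in> H \<Longrightarrow> h \<in> Bij X \<and> h ` Y = Y"
    and YX: "Y \<subseteq> X"
    and g: "g \<in> generate (BijGroup X) H"
  shows "g \<in> Bij X \<and> g ` Y = Y"
  using g
proof (induction rule: generate.induct)
  case one
  have e: "\<one>\<^bsub>BijGroup X\<^esub> = (\<lambda>x\<in>X. x)" by (simp add: BijGroup_def)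
  have i: "(\<lambda>x\<in>X. x) ` Y = Y" using YX by (intro equalityI subsetI) (auto simp: image_def)
  show ?case unfolding e using id_Bij[of X] i by (rule conjI)
next
  case (incl h)
  then show ?case using H by blast
next
  case (inv h)
  have hb: "h \<in> Bij X" and hY: "h ` Y = Y" using H inv by auto
  have bij: "bij_betw h X X" using hb by (simp add: Bij_def)
  have e: "m_inv (BijGroup X) h = (\<lambda>x \<in> X. (inv_into X h) x)" by (rule inv_BijGroup[OF hb])
  have i: "(\<lambda>x \<in> X. (inv_into X h) x) ` Y = Y"
  proof -
    have "(\<lambda>x \<in> X. (inv_into X h) x) ` Y = inv_into X h ` Y" using YX by (auto simp: image_def)
    also have "\<dots> = inv_into X h ` (h ` Y)" using hY by simp
    also have "\<dots> = Y" using bij YX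
      by (meson bij_betw_def inv_into_image_cancel)
    finally show ?thesis .
  qed
  show ?case unfolding e using restrict_inv_into_Bij[OF hb] i by (rule conjI)
next
  case (eng h1 h2)
  have "h1 \<otimes>\<^bsub>BijGroup X\<^esub> h2 = compose X h1 h2" using eng by (simp add: BijGroup_def)
  moreover have "compose X h1 h2 ` Y = h1 ` (h2 ` Y)" using YX
    by (auto simp: compose_def image_def)
  moreover have "compose X h1 h2 \<in> Bij X" using eng.IH by (intro compose_Bij) auto
  ultimately show ?case using eng by simp
qed

lemma sq_lemma:
  assumes bf: "bij_betw (\<lambda>x. f x x) X X" and YX: "Y \<subseteq> X" and fY: "finite Y"
    and cf: "\<forall>x\<in>Y. f x x \<in> Y"
  shows "(\<lambda>x\<in>X. f x x) \<in> Bij X \<and> (\<lambda>x\<in>X. f x x) ` Y = Y"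
proof
  have "bij_betw (\<lambda>x\<in>X. f x x) X X = bij_betw (\<lambda>x. f x x) X X"
    by (rule bij_betw_cong) simp
  then have "bij_betw (\<lambda>x\<in>X. f x x) X X" using bf by blast
  then show "(\<lambda>x\<in>X. f x x) \<in> Bij X" unfolding Bij_def using restrict_extensional by blast
  have e: "(\<lambda>x\<in>X. f x x) ` Y = (\<lambda>x. f x x) ` Y" using YX by (intro image_cong) auto
  have inj: "inj_on (\<lambda>x. f x x) Y" using bf YX unfolding bij_betw_def by (meson inj_on_subset)
  have sub: "(\<lambda>x. f x x) ` Y \<subseteq> Y" using cf by auto
  have "card ((\<lambda>x. f x x) ` Y) = card Y" using inj card_image by blast
  then have "(\<lambda>x. f x x) ` Y = Y" using sub fY card_subset_eq by blast
  then show "(\<lambda>x\<in>X. f x x) ` Y = Y" using e by simp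
qed

theorem mainTheorem16:
  fixes X :: "'a set" and dot col :: "'a \<Rightarrow> 'a \<Rightarrow> 'a"
  assumes "q_cycle_set X dot col"
    and "finite X"
    and "bij_betw (\<lambda>x. dot x x) X X"
    and "bij_betw (\<lambda>x. col x x) X X"
    and "\<forall>x\<in>X. \<forall>y\<in>X. \<exists>g\<in>generate (BijGroup X) {sq_dot X dot, sq_col X col}. g x = y"
  shows "irreducible_qcs X dot col"
  unfolding irreducible_qcs_def
proof (intro allI impI)
  fix Y assume "sub_q_cycle_set X dot col Y"
  then have YX: "Y \<subseteq> X" and Ycase: "Y = {} \<or> q_cycle_set Y dot col"
    by (auto simp: sub_q_cycle_set_def)
  show "Y = {} \<or> Y = X"
  proof (cases "Y = {}")
    case True then show ?thesis by simp
  next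
    case False
    then have qY: "q_cycle_set Y dot col" using Ycase by simp
    have clos: "\<forall>x\<in>Y. \<forall>y\<in>Y. dot x y \<in> Y \<and> col x y \<in> Y" using qY[unfolded q_cycle_set_def, THEN conjunct2, THEN conjunct1] .
    have fY: "finite Y" using YX assms(2) finite_subset by blast
    have H: "h \<in> Bij X \<and> h ` Y = Y" if "h \<in> {sq_dot X dot, sq_col X col}" for h
    proof -
      have c1: "\<forall>x\<in>Y. dot x x \<in> Y" and c2: "\<forall>x\<in>Y. col x x \<in> Y" using clos by auto
      have "h = sq_dot X dot \<or> h = sq_col X col" using that by blast
      then show ?thesis
      proof
        assume "h = sq_dot X dot"
        then show ?thesis using sq_lemma[of dot X Y, OF assms(3) YX fY c1] by (simp add: sq_dot_def)
      next
        assume "h = sq_col X col"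
        then show ?thesis using sq_lemma[of col X Y, OF assms(4) YX fY c2] by (simp add: sq_col_def)
      qed
    qed
    obtain y0 where y0: "y0 \<in> Y" using False by blast
    have "X \<subseteq> Y"
    proof
      fix x assume x: "x \<in> X"
      have y0X: "y0 \<in> X" using y0 YX by blast
      obtain g where g: "g \<in> generate (BijGroup X) {sq_dot X dot, sq_col X col}" "g y0 = x"
        using bspec[OF bspec[OF assms(5) y0X] x] by (elim bexE)
      have "g ` Y = Y" using gen_inv[OF H YX g(1)] by blast
      then show "x \<in> Y" using g(2) y0 by blast
    qed
    then show ?thesis using YX by blast
  qed
qed

end
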